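(* Let $G$ be a saturated graph with $mp(G) = k$, and let $H$ be the graph obtained from $G$ by adding a new vertex $v$ adjacent to all vertices of $G$. Then $mp(H) = k+1$ and $H$ is saturated.
   Context: All graphs are finite and simple. A degree monotone path in a graph $G$ is a path $v_1v_2\ldots v_m$ such that $\deg(v_1)\le \cdots\le \deg(v_m)$ or $\deg(v_1)\ge \cdots\ge \deg(v_m)$; its length is its number of vertices. $mp(G)$ denotes the maximum length of a degree monotone path in $G$. A graph $G$ is saturated if $mp(G+e)>mp(G)$ for every pair $e$ of non-adjacent vertices of $G$, where $G+e$ is $G$ with the edge $e$ added. *)

theory Defs
  imports Main
begin

definition simple_graph :: "'a set \<Rightarrow> 'a set set \<Rightarrow> bool" where
  "simple_graph V E \<longleftrightarrow> finite V \<and>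
     (\<forall>e\<in>E. \<exists>u w. e = {u, w} \<and> u \<noteq> w \<and> u \<in> V \<and> w \<in> V)"

definition degree :: "'a set \<Rightarrow> 'a set set \<Rightarrow> 'a \<Rightarrow> nat" where
  "degree V E v = card {w \<in> V. {v, w} \<in> E}"

definition is_path :: "'a set \<Rightarrow> 'a set set \<Rightarrow> 'a list \<Rightarrow> bool" where
  "is_path V E xs \<longleftrightarrow> xs \<noteq> [] \<and> distinct xs \<and> set xs \<subseteq> V \<and>
     (\<forall>i. Suc i < length xs \<longrightarrow> {xs ! i, xs ! Suc i} \<in> E)"

definition degree_monotone_path :: "'a set \<Rightarrow> 'a set set \<Rightarrow> 'a list \<Rightarrow> bool" where
  "degree_monotone_path V E xs \<longleftrightarrow> is_path V E xs \<and>
     (sorted (map (degree V E) xs) \<or> sorted (rev (map (degree V E) xs)))"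

text \<open>Maximum number of vertices of a degree monotone path (0 for the empty graph).\<close>
definition mp :: "'a set \<Rightarrow> 'a set set \<Rightarrow> nat" where
  "mp V E = Sup (length ` {xs. degree_monotone_path V E xs})"

definition saturated :: "'a set \<Rightarrow> 'a set set \<Rightarrow> bool" where
  "saturated V E \<longleftrightarrow> (\<forall>u\<in>V. \<forall>w\<in>V. u \<noteq> w \<and> {u, w} \<notin> E \<longrightarrow>
      mp V (insert {u, w} E) > mp V E)"

definition add_universal_vertex :: "'a set \<Rightarrow> 'a set set \<Rightarrow> 'a \<Rightarrow> 'a set \<times> 'a set set" where
  "add_universal_vertex V E v = (insert v V, E \<union> {{v, u} | u. u \<in> V})"

end

theory Submission
  imports Defs
begin

lemma is_path_succ:
  "is_path V E xs \<longleftrightarrow> xs \<noteq> [] \<and> distinct xs \<and> set xs \<subseteq> V \<and>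
     successively (\<lambda>a b. {a,b} \<in> E) xs"
  unfolding is_path_def successively_conv_nth by blast

lemma dmp_rev: "degree_monotone_path V E xs \<Longrightarrow> degree_monotone_path V E (rev xs)"
  unfolding degree_monotone_path_def is_path_succ
  by (auto simp: rev_map[symmetric] insert_commute)

lemma dmp_wlog:
  assumes "degree_monotone_path V E xs"
  obtains ys where "degree_monotone_path V E ys" "sorted (map (degree V E) ys)"
    "length ys = length xs"
proof -
  from assms have "sorted (map (degree V E) xs) \<or> sorted (map (degree V E) (rev xs))"
    unfolding degree_monotone_path_def by (simp add: rev_map)
  then show ?thesis using that assms dmp_rev by (metis length_rev)
qed

lemma dmp_len:
  assumes "finite V" "degree_monotone_path V E xs"
  shows "length xs \<le> card V"
proof -
  have "distinct xs" "set xs \<subseteq> V" using assms(2)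
    unfolding degree_monotone_path_def is_path_def by auto
  then show ?thesis using assms(1) by (metis card_mono distinct_card)
qed

lemma mp_ge:
  assumes "finite V" "degree_monotone_path V E xs"
  shows "length xs \<le> mp V E"
proof -
  have "bdd_above (length ` {xs. degree_monotone_path V E xs})"
    using dmp_len[OF assms(1)] by (auto simp: bdd_above_def)
  then show ?thesis unfolding mp_def using assms(2) by (auto intro: cSup_upper)
qed

lemma mp_le:
  assumes "\<And>xs. degree_monotone_path V E xs \<Longrightarrow> length xs \<le> m"
  shows "mp V E \<le> m"
proof (cases "{xs. degree_monotone_path V E xs} = {}")
  case True
  then have "length ` {xs. degree_monotone_path V E xs} = {}" by blast
  then show ?thesis unfolding mp_def by (metis Sup_nat_empty le0)
next
  case False then show ?thesis unfolding mp_def using assms by (auto intro: cSup_least)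
qed

lemma mp_attained:
  assumes "finite V" "mp V E \<noteq> 0"
  obtains xs where "degree_monotone_path V E xs" "length xs = mp V E"
proof -
  let ?L = "length ` {xs. degree_monotone_path V E xs}"
  have ne: "?L \<noteq> {}" using assms(2) unfolding mp_def by (metis Sup_nat_empty)
  have "finite ?L"
    by (rule finite_subset[of _ "{..card V}"]) (use dmp_len[OF assms(1)] in auto)
  then have "Sup ?L \<in> ?L" using ne by (simp add: Sup_nat_def)
  then show ?thesis using that unfolding mp_def by auto
qed

context
  fixes V :: "'a set" and E :: "'a set set" and v :: 'a
  assumes sg: "simple_graph V E" and vn: "v \<notin> V"
begin

abbreviation "V' \<equiv> insert v V"
abbreviation "E' \<equiv> E \<union> {{v, u} | u. u \<in> V}"

lemma finV: "finite V" using sg unfolding simple_graph_def by auto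

lemma edgeE: "e \<in> E \<Longrightarrow> \<exists>a b. e = {a,b} \<and> a \<noteq> b \<and> a \<in> V \<and> b \<in> V"
  using sg unfolding simple_graph_def by auto

lemma deg_old:
  assumes "u \<in> V" shows "degree V' E' u = Suc (degree V E u)"
proof -
  have "{w \<in> V'. {u, w} \<in> E'} = insert v {w \<in> V. {u, w} \<in> E}"
  proof (intro equalityI subsetI)
    fix w assume w: "w \<in> {w \<in> V'. {u, w} \<in> E'}"
    show "w \<in> insert v {w \<in> V. {u, w} \<in> E}"
    proof (cases "w = v")
      case False
      then have "w \<in> V" using w by auto
      moreover have "{u,w} \<in> E" using w False assms vn by (auto simp: doubleton_eq_iff)
      ultimately show ?thesis by auto
    qed auto
  next
    fix w assume "w \<in> insert v {w \<in> V. {u, w} \<in> E}"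
    then show "w \<in> {w \<in> V'. {u, w} \<in> E'}" using assms by (auto simp: insert_commute)
  qed
  moreover have "finite {w \<in> V. {u, w} \<in> E}" using finV by auto
  ultimately show ?thesis unfolding degree_def using vn by simp
qed

lemma deg_new: "degree V' E' v = card V"
proof -
  have "{w \<in> V'. {v, w} \<in> E'} = V"
  proof (intro equalityI subsetI)
    fix w assume w: "w \<in> {w \<in> V'. {v, w} \<in> E'}"
    show "w \<in> V"
    proof (rule ccontr)
      assume "w \<notin> V" then have "w = v" using w by auto
      then have "{v} \<in> E'" using w by auto
      then show False using edgeE vn by (auto simp: doubleton_eq_iff)
    qed
  qed auto
  then show ?thesis unfolding degree_def by simp
qed

lemma deg_set_sub: "u \<in> V \<Longrightarrow> {w \<in> V. {u, w} \<in> E} \<subseteq> V - {u}"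
  using edgeE by (fastforce simp: doubleton_eq_iff)

lemma deg_bound: "u \<in> V \<Longrightarrow> Suc (degree V E u) \<le> card V"
proof -
  assume u: "u \<in> V"
  have "degree V E u \<le> card (V - {u})" unfolding degree_def
    using deg_set_sub[OF u] finV by (simp add: card_mono)
  then show ?thesis using u finV card_Diff1_less[OF finV u] by simp
qed

lemma deg_full:
  assumes u: "u \<in> V" and d: "card V \<le> Suc (degree V E u)" and w: "w \<in> V" "w \<noteq> u"
  shows "{u, w} \<in> E"
proof -
  have "card (V - {u}) \<le> card {w \<in> V. {u, w} \<in> E}"
    using d u finV unfolding degree_def by simp
  then have "{w \<in> V. {u, w} \<in> E} = V - {u}"
    using deg_set_sub[OF u] finV by (meson card_seteq finite_Diff)
  then show ?thesis using w by auto
qed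

lemma map_deg: "set xs \<subseteq> V \<Longrightarrow> map (degree V' E') xs = map Suc (map (degree V E) xs)"
  using deg_old by auto

lemma sorted_Suc: "sorted (map Suc l) \<longleftrightarrow> sorted l"
  by (simp add: sorted_map)

lemma sorted_Suc2: "sorted (map (Suc \<circ> f) l) \<longleftrightarrow> sorted (map f l)"
  by (simp add: sorted_map)

lemma lower: "Suc (mp V E) \<le> mp V' E'"
proof (cases "mp V E = 0")
  case True
  have "degree_monotone_path V' E' [v]"
    unfolding degree_monotone_path_def is_path_def by auto
  then show ?thesis using mp_ge[of V' E' "[v]"] finV True by simp
next
  case False
  obtain xs where xs: "degree_monotone_path V E xs" "length xs = mp V E"
    using mp_attained[OF finV False] by blast
  obtain ys where ys: "degree_monotone_path V E ys" "sorted (map (degree V E) ys)"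
    "length ys = length xs" by (rule dmp_wlog[OF xs(1)])
  have p: "ys \<noteq> []" "distinct ys" "set ys \<subseteq> V" "successively (\<lambda>a b. {a,b} \<in> E) ys"
    using ys(1) unfolding degree_monotone_path_def is_path_succ by auto
  have s1: "successively (\<lambda>a b. {a,b} \<in> E') ys"
    using p(4) by (rule successively_mono) auto
  have "last ys \<in> V" using p by auto
  then have "{last ys, v} \<in> E'" by (auto simp: insert_commute)
  then have "successively (\<lambda>a b. {a,b} \<in> E') (ys @ [v])"
    using s1 p(1) by (simp add: successively_append_iff)
  moreover have "sorted (map (degree V' E') (ys @ [v]))"
    using ys(2) p(3) deg_bound by (auto simp: map_deg sorted_Suc sorted_Suc2 sorted_append deg_new)
  ultimately have "degree_monotone_path V' E' (ys @ [v])"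
    using p vn unfolding degree_monotone_path_def is_path_succ by auto
  then have "length (ys @ [v]) \<le> mp V' E'" using finV by (intro mp_ge) auto
  then show ?thesis using ys(3) xs(2) by simp
qed

lemma upper: "mp V' E' \<le> Suc (mp V E)"
proof (rule mp_le)
  fix xs0 assume a0: "degree_monotone_path V' E' xs0"
  obtain xs where xs: "degree_monotone_path V' E' xs" "sorted (map (degree V' E') xs)"
    "length xs = length xs0" by (rule dmp_wlog[OF a0])
  have p: "xs \<noteq> []" "distinct xs" "set xs \<subseteq> V'" "successively (\<lambda>a b. {a,b} \<in> E') xs"
    using xs(1) unfolding degree_monotone_path_def is_path_succ by auto
  have transf: "{a,b} \<in> E" if "{a,b} \<in> E'" "a \<noteq> v" "b \<noteq> v" for a b
  proof -
    have "v \<notin> {a,b}" using that by simp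
    then have "{a,b} \<notin> {{v,u}|u. u\<in>V}" by blast
    then show ?thesis using that(1) by blast
  qed
  show "length xs0 \<le> Suc (mp V E)"
  proof (cases "v \<in> set xs")
    case False
    have sV: "set xs \<subseteq> V" using p(3) False by blast
    have s1: "successively (\<lambda>a b. {a,b} \<in> E) xs"
      using p(4)
    proof (rule successively_mono)
      fix x y assume h: "x \<in> set xs" "y \<in> set xs" "{x,y} \<in> E'"
      have "x \<noteq> v" "y \<noteq> v" using False h by auto
      then show "{x,y} \<in> E" using transf h(3) by blast
    qed
    from xs(2) have "sorted (map Suc (map (degree V E) xs))" by (simp only: map_deg[OF sV])
    then have s2: "sorted (map (degree V E) xs)" by (simp only: sorted_Suc)
    have "degree_monotone_path V E xs"
      unfolding degree_monotone_path_def is_path_succ using p(1,2) sV s1 s2 by blast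
    then have "length xs \<le> mp V E" by (rule mp_ge[OF finV])
    then show ?thesis using xs(3) by simp
  next
    case True
    then obtain ys zs where sp: "xs = ys @ v # zs" by (meson split_list)
    show ?thesis
    proof (cases "ys @ zs = []")
      case True then show ?thesis using sp xs(3) by simp
    next
      case ne: False
      have dist: "distinct (ys @ zs)" "v \<notin> set ys" "v \<notin> set zs" using p(2) sp by auto
      have sub: "set (ys @ zs) \<subseteq> V" using p(3) sp dist by auto
      have s0: "successively (\<lambda>a b. {a,b} \<in> E') (ys @ (v # zs))"
        using p(4) sp by simp
      note sa = s0[unfolded successively_append_iff]
      have sy: "successively (\<lambda>a b. {a,b} \<in> E') ys"
        using sa by (rule conjunct1)
      have svz: "successively (\<lambda>a b. {a,b} \<in> E') (v # zs)"
        using sa by (rule conjunct2[THEN conjunct1])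
      have sz: "successively (\<lambda>a b. {a,b} \<in> E') zs"
      proof (cases zs)
        case Nil then show ?thesis by (simp only: successively.simps)
      next
        case (Cons z zs')
        then show ?thesis using svz by (simp only: successively.simps)
      qed
      have sy': "successively (\<lambda>a b. {a,b} \<in> E) ys"
        using sy
      proof (rule successively_mono)
        fix x y assume h: "x \<in> set ys" "y \<in> set ys" "{x,y} \<in> E'"
        have "x \<noteq> v" "y \<noteq> v" using dist(2) h by auto
        then show "{x,y} \<in> E" using transf h(3) by blast
      qed
      have sz': "successively (\<lambda>a b. {a,b} \<in> E) zs"
        using sz
      proof (rule successively_mono)
        fix x y assume h: "x \<in> set zs" "y \<in> set zs" "{x,y} \<in> E'"
        have "x \<noteq> v" "y \<noteq> v" using dist(3) h by auto
        then show "{x,y} \<in> E" using transf h(3) by blast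
      qed
      have srt: "sorted (map (degree V' E') (ys @ v # zs))" using xs(2) sp by simp
      have junc: "{last ys, hd zs} \<in> E" if "ys \<noteq> []" "zs \<noteq> []"
      proof -
        have hz: "hd zs \<in> set zs" "last ys \<in> set ys" using that by auto
        have "degree V' E' v \<le> degree V' E' (hd zs)"
          using srt hz by (auto simp: sorted_append)
        then have "card V \<le> Suc (degree V E (hd zs))"
          using deg_new deg_old hz sub by auto
        moreover have "last ys \<noteq> hd zs" using dist(1) hz by auto
        ultimately have "{hd zs, last ys} \<in> E" using deg_full hz sub by auto
        then show ?thesis by (simp add: insert_commute)
      qed
      have "successively (\<lambda>a b. {a,b} \<in> E) (ys @ zs)"
        using sy' sz' junc by (auto simp: successively_append_iff)
      moreover have "sorted (map (degree V' E') (ys @ zs))"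
        using srt by (auto simp: sorted_append)
      then have "sorted (map Suc (map (degree V E) (ys @ zs)))" by (simp only: map_deg[OF sub])
      then have "sorted (map (degree V E) (ys @ zs))" by (simp only: sorted_Suc)
      ultimately have "degree_monotone_path V E (ys @ zs)"
        using ne dist sub unfolding degree_monotone_path_def is_path_succ by auto
      then have "length (ys @ zs) \<le> mp V E" using mp_ge[OF finV] by blast
      then show ?thesis using sp xs(3) by simp
    qed
  qed
qed

lemma mp_univ: "mp V' E' = Suc (mp V E)"
  using lower upper by simp

end

theorem lemma2p6:
  fixes V :: "'a set" and E :: "'a set set" and v :: 'a and k :: nat
  assumes "simple_graph V E"
    and "saturated V E"
    and "mp V E = k"
    and "v \<notin> V"
  shows "mp (fst (add_universal_vertex V E v)) (snd (add_universal_vertex V E v)) = k + 1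
       \<and> saturated (fst (add_universal_vertex V E v)) (snd (add_universal_vertex V E v))"
proof -
  have m: "mp (insert v V) (E \<union> {{v, u} | u. u \<in> V}) = k + 1"
    using mp_univ[OF assms(1,4)] assms(3) by simp
  have sat: "saturated (insert v V) (E \<union> {{v, u} | u. u \<in> V})"
    unfolding saturated_def
  proof (intro ballI impI)
    fix u w assume u: "u \<in> insert v V" and w: "w \<in> insert v V"
      and h: "u \<noteq> w \<and> {u, w} \<notin> E \<union> {{v, u} | u. u \<in> V}"
    have uV: "u \<in> V" using u w h by (auto simp: insert_commute)
    have wV: "w \<in> V" using u w h by (auto simp: insert_commute)
    have nE: "{u,w} \<notin> E" using h by auto
    have sg2: "simple_graph V (insert {u,w} E)"
      using assms(1) uV wV h unfolding simple_graph_def by auto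
    have "mp V (insert {u,w} E) > k"
      using assms(2,3) uV wV h unfolding saturated_def by auto
    moreover have "insert {u, w} (E \<union> {{v, u} | u. u \<in> V}) =
       insert {u,w} E \<union> {{v, u} | u. u \<in> V}" by auto
    ultimately show "mp (insert v V) (insert {u, w} (E \<union> {{v, u} | u. u \<in> V}))
        > mp (insert v V) (E \<union> {{v, u} | u. u \<in> V})"
      using mp_univ[OF sg2 assms(4)] m by simp
  qed
  show ?thesis using m sat unfolding add_universal_vertex_def by simp
qed

end
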